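(* Let $S=\{v_1,\ldots,v_n\}\subset\mathbb Z^n$ be an orthogonal subset with $|V_\alpha|\ge2$ for all $\alpha$. Let $i\in\mathcal P_2$ with $E_i=\{s,t\}$ and $|\langle v_s,e_i\rangle|=|\langle v_t,e_i\rangle|=1$. Then, up to a change of basis of $\mathbb Z^n$ and negation of $v_s$ or $v_t$, $v_s=e_i+e_j$ and $v_t=e_i-e_j$ for some $j\in\mathcal P_2$.
   Context: $\mathbb Z^n$ carries the standard dot product with standard basis $e_1,\ldots,e_n$. $S$ is orthogonal if $\langle v_\alpha,v_\alpha\rangle\ge1$ for all $\alpha$ and $\langle v_\alpha,v_\beta\rangle=0$ for $\alpha\ne\beta$. $V_\alpha=\{j:\langle v_\alpha,e_j\rangle\ne0\}$, $E_j=\{\alpha:\langle v_\alpha,e_j\rangle\ne0\}$, $\mathcal P_2=\{j:|E_j|=2\}$. A change of basis of $\mathbb Z^n$ means replacing the standard basis by another orthonormal basis (a signed permutation of coordinates). *)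

theory Defs
  imports Main
begin

text \<open>Vectors of Z^n are functions nat => int, only coordinates 1..n are relevant.
  A family S = {v_1,...,v_n} is a function v :: nat => nat => int, with v alpha the
  vector v_alpha (alpha in 1..n), and v alpha j = <v_alpha, e_j>.\<close>

definition dotp :: "nat \<Rightarrow> (nat \<Rightarrow> int) \<Rightarrow> (nat \<Rightarrow> int) \<Rightarrow> int" where
  "dotp n x y = (\<Sum>j\<in>{1..n}. x j * y j)"

definition unitv :: "nat \<Rightarrow> nat \<Rightarrow> int" where
  "unitv i = (\<lambda>j. if j = i then 1 else 0)"

definition orthogonal_family :: "nat \<Rightarrow> (nat \<Rightarrow> nat \<Rightarrow> int) \<Rightarrow> bool" where
  "orthogonal_family n v \<longleftrightarrow>
     (\<forall>\<alpha>\<in>{1..n}. dotp n (v \<alpha>) (v \<alpha>) \<ge> 1) \<and>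
     (\<forall>\<alpha>\<in>{1..n}. \<forall>\<beta>\<in>{1..n}. \<alpha> \<noteq> \<beta> \<longrightarrow> dotp n (v \<alpha>) (v \<beta>) = 0)"

definition Vsupp :: "nat \<Rightarrow> (nat \<Rightarrow> nat \<Rightarrow> int) \<Rightarrow> nat \<Rightarrow> nat set" where
  "Vsupp n v \<alpha> = {j\<in>{1..n}. dotp n (v \<alpha>) (unitv j) \<noteq> 0}"

definition Eset :: "nat \<Rightarrow> (nat \<Rightarrow> nat \<Rightarrow> int) \<Rightarrow> nat \<Rightarrow> nat set" where
  "Eset n v j = {\<alpha>\<in>{1..n}. dotp n (v \<alpha>) (unitv j) \<noteq> 0}"

definition P2 :: "nat \<Rightarrow> (nat \<Rightarrow> nat \<Rightarrow> int) \<Rightarrow> nat set" where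
  "P2 n v = {j\<in>{1..n}. card (Eset n v j) = 2}"

text \<open>Change of basis: new orthonormal basis f_k = eps k * e_(pi k), with pi a permutation
  of {1..n} and eps k = +-1. The new coordinate vector of x is k |-> <x, f_k>.\<close>

definition signed_perm :: "nat \<Rightarrow> (nat \<Rightarrow> nat) \<Rightarrow> (nat \<Rightarrow> int) \<Rightarrow> bool" where
  "signed_perm n \<pi> \<epsilon> \<longleftrightarrow> bij_betw \<pi> {1..n} {1..n} \<and> (\<forall>k\<in>{1..n}. \<epsilon> k \<in> {1, -1})"

definition change_basis :: "(nat \<Rightarrow> nat) \<Rightarrow> (nat \<Rightarrow> int) \<Rightarrow> (nat \<Rightarrow> int) \<Rightarrow> (nat \<Rightarrow> int)" where
  "change_basis \<pi> \<epsilon> x = (\<lambda>k. \<epsilon> k * x (\<pi> k))"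

end

theory Submission
  imports Defs "Jordan_Normal_Form.Determinant"
begin

lemma sum_shift1: "(\<Sum>j\<in>{1..n}. f j) = (\<Sum>j<n. f (Suc j))"
  by (induct n) auto

lemma completeness:
  fixes w :: "nat \<Rightarrow> nat \<Rightarrow> real" and N :: "nat \<Rightarrow> real"
  assumes orth: "\<And>a b. a < n \<Longrightarrow> b < n \<Longrightarrow> (\<Sum>k<n. w a k * w b k) = (if a = b then N a else 0)"
    and nz: "\<And>a. a < n \<Longrightarrow> N a \<noteq> 0"
    and kl: "k < n" "l < n"
  shows "(\<Sum>a<n. w a k * w a l / N a) = (if k = l then 1 else 0)"
proof -
  define A where "A = mat n n (\<lambda>(a,k). w a k)"
  define B where "B = mat n n (\<lambda>(k,a). w a k / N a)"
  have A: "A \<in> carrier_mat n n" and B: "B \<in> carrier_mat n n" unfolding A_def B_def by auto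
  have "A * B = 1\<^sub>m n"
  proof (rule eq_matI)
    fix a b assume ab: "a < dim_row (1\<^sub>m n :: real mat)" "b < dim_col (1\<^sub>m n :: real mat)"
    hence "(A * B) $$ (a, b) = (\<Sum>k<n. w a k * (w b k / N b))"
      by (auto simp: A_def B_def scalar_prod_def row_def col_def lessThan_atLeast0)
    also have "\<dots> = (\<Sum>k<n. w a k * w b k) / N b" by (simp add: sum_divide_distrib)
    also have "\<dots> = (1\<^sub>m n :: real mat) $$ (a, b)" using ab orth[of a b] nz[of b] by auto
    finally show "(A * B) $$ (a, b) = (1\<^sub>m n :: real mat) $$ (a, b)" .
  qed (auto simp: A_def B_def)
  hence BA: "B * A = 1\<^sub>m n" using mat_mult_left_right_inverse[OF A B] by simp
  have "(B * A) $$ (k, l) = (\<Sum>a<n. w a k / N a * w a l)"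
    using kl by (auto simp: A_def B_def scalar_prod_def row_def col_def lessThan_atLeast0)
  thus ?thesis using BA kl by (simp add: mult.commute mult.left_commute)
qed

lemma key:
  assumes orth: "orthogonal_family n v" and k: "k \<in> {1..n}" and l: "l \<in> {1..n}"
  shows "(\<Sum>\<alpha>\<in>{1..n}. real_of_int (v \<alpha> k * v \<alpha> l) / real_of_int (dotp n (v \<alpha>) (v \<alpha>)))
         = (if k = l then 1 else 0)"
proof -
  define w where "w a j = real_of_int (v (Suc a) (Suc j))" for a j
  define N where "N a = real_of_int (dotp n (v (Suc a)) (v (Suc a)))" for a
  have o: "(\<Sum>j<n. w a j * w b j) = (if a = b then N a else 0)" if "a < n" "b < n" for a b
  proof -
    have "(\<Sum>j<n. w a j * w b j) = real_of_int (dotp n (v (Suc a)) (v (Suc b)))"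
      unfolding w_def dotp_def sum_shift1 by simp
    thus ?thesis using orth that unfolding orthogonal_family_def N_def by auto
  qed
  have nz: "N a \<noteq> 0" if "a < n" for a
  proof -
    have "Suc a \<in> {1..n}" using that by simp
    hence "dotp n (v (Suc a)) (v (Suc a)) \<ge> 1" using orth unfolding orthogonal_family_def by blast
    thus ?thesis unfolding N_def by simp
  qed
  have "(\<Sum>a<n. w a (k - 1) * w a (l - 1) / N a) = (if k - 1 = l - 1 then 1 else 0)"
    by (rule completeness[OF o nz]) (use k l in auto)
  moreover have "(\<Sum>a<n. w a (k - 1) * w a (l - 1) / N a) =
     (\<Sum>\<alpha>\<in>{1..n}. real_of_int (v \<alpha> k * v \<alpha> l) / real_of_int (dotp n (v \<alpha>) (v \<alpha>)))"
    unfolding sum_shift1 w_def N_def using k l by simp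
  moreover have e: "(k - 1 = l - 1) = (k = l)" using k l by auto
  ultimately show ?thesis by metis
qed

lemma dotp_unitv: "j \<in> {1..n} \<Longrightarrow> dotp n x (unitv j) = x j"
  unfolding dotp_def unitv_def by (simp add: if_distrib cong: if_cong)


lemma sum_split2:
  assumes "finite A" "s \<in> A" "t \<in> A" "s \<noteq> t"
  shows "sum f A = f s + f t + sum f (A - {s, t})"
proof -
  have "sum f A = f s + sum f (A - {s})" using assms by (simp add: sum.remove)
  also have "sum f (A - {s}) = f t + sum f (A - {s} - {t})" using assms by (simp add: sum.remove)
  also have "A - {s} - {t} = A - {s, t}" by auto
  finally show ?thesis by (simp add: add.assoc)
qed

lemma int_prod1: "(x::int) \<ge> 0 \<Longrightarrow> y \<ge> 0 \<Longrightarrow> x * y = 1 \<Longrightarrow> x = 1 \<and> y = 1"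
proof -
  assume a: "x \<ge> 0" "y \<ge> 0" "x * y = 1"
  hence "x \<noteq> 0" by auto
  hence "x > 0" using a by simp
  thus ?thesis using pos_zmult_eq_1_iff a(3) by blast
qed

lemma sq_sum_zero:
  assumes "finite A" "(\<Sum>k\<in>A. (x k :: int) * x k) = 0" "k \<in> A"
  shows "x k = 0"
proof -
  have "\<forall>k\<in>A. x k * x k = 0"
    using assms(2) sum_nonneg_eq_0_iff[OF assms(1), of "\<lambda>k. x k * x k"] by simp
  thus ?thesis using assms(3) by simp
qed

lemma sq_sum_one:
  assumes "finite A" "(\<Sum>k\<in>A. (x k :: int) * x k) = 1"
  shows "\<exists>j\<in>A. x j * x j = 1 \<and> (\<forall>k\<in>A. k \<noteq> j \<longrightarrow> x k = 0)"
proof -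
  obtain j where j: "j \<in> A" "x j \<noteq> 0"
  proof (rule ccontr)
    assume "\<not> thesis"
    hence "\<forall>k\<in>A. x k = 0" using that by blast
    hence "(\<Sum>k\<in>A. (x k :: int) * x k) = 0" by simp
    thus False using assms(2) by simp
  qed
  have ge: "x j * x j \<ge> 1"
    using j(2) by (smt (verit) mult_le_0_iff zero_less_mult_iff mult_mono not_le)
  have sp: "(\<Sum>k\<in>A. x k * x k) = x j * x j + (\<Sum>k\<in>A - {j}. x k * x k)"
    using assms(1) j(1) by (simp add: sum.remove)
  have nn: "(\<Sum>k\<in>A - {j}. x k * x k) \<ge> 0" by (simp add: sum_nonneg)
  have e1: "x j * x j = 1" and e0: "(\<Sum>k\<in>A - {j}. x k * x k) = 0"
    using sp nn ge assms(2) by linarith+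
  have "\<forall>k\<in>A. k \<noteq> j \<longrightarrow> x k = 0"
    using sq_sum_zero[OF _ e0] assms(1) by blast
  thus ?thesis using e1 j(1) by blast
qed


theorem lemma4p2:
  fixes n :: nat and v :: "nat \<Rightarrow> nat \<Rightarrow> int" and i s t :: nat
  assumes orth: "orthogonal_family n v"
    and supp: "\<forall>\<alpha>\<in>{1..n}. card (Vsupp n v \<alpha>) \<ge> 2"
    and iP2: "i \<in> P2 n v"
    and Ei: "Eset n v i = {s, t}"
    and vs: "\<bar>dotp n (v s) (unitv i)\<bar> = 1"
    and vt: "\<bar>dotp n (v t) (unitv i)\<bar> = 1"
  shows "\<exists>\<pi> \<epsilon> a b j. signed_perm n \<pi> \<epsilon> \<and> a \<in> {1, -1} \<and> b \<in> {1, -1} \<and>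
           j \<in> P2 n (\<lambda>\<alpha>. change_basis \<pi> \<epsilon> (v \<alpha>)) \<and>
           (\<forall>k\<in>{1..n}. a * change_basis \<pi> \<epsilon> (v s) k = unitv i k + unitv j k) \<and>
           (\<forall>k\<in>{1..n}. b * change_basis \<pi> \<epsilon> (v t) k = unitv i k - unitv j k)"
proof -
  define D where "D \<alpha> = dotp n (v \<alpha>) (v \<alpha>)" for \<alpha>
  have iI: "i \<in> {1..n}" using iP2 unfolding P2_def by auto
  have cst: "card {s, t} = 2" using iP2 Ei unfolding P2_def by auto
  have st: "s \<noteq> t"
  proof
    assume "s = t" hence "card {s, t} = 1" by simp
    thus False using cst by simp
  qed
  have sI: "s \<in> {1..n}" and tI: "t \<in> {1..n}" using Ei unfolding Eset_def by blast+
  have Dpos: "D \<alpha> \<ge> 1" if "\<alpha> \<in> {1..n}" for \<alpha>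
    using orth that unfolding orthogonal_family_def D_def by blast
  have zi: "v \<alpha> i = 0" if "\<alpha> \<in> {1..n}" "\<alpha> \<noteq> s" "\<alpha> \<noteq> t" for \<alpha>
  proof -
    have "\<alpha> \<notin> Eset n v i" using Ei that by auto
    thus ?thesis using that(1) dotp_unitv[OF iI] unfolding Eset_def by auto
  qed
  have si: "v s i * v s i = 1" using vs dotp_unitv[OF iI]
    by (metis abs_mult_self_eq mult_1_right)
  have ti: "v t i * v t i = 1" using vt dotp_unitv[OF iI]
    by (metis abs_mult_self_eq mult_1_right)
  have fin: "finite {1..n}" by simp
  have Dst: "D s = 2 \<and> D t = 2"
  proof -
    have k: "(\<Sum>\<alpha>\<in>{1..n}. real_of_int (v \<alpha> i * v \<alpha> i) / real_of_int (D \<alpha>)) = 1"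
      using key[OF orth iI iI] unfolding D_def by simp
    have r: "(\<Sum>\<alpha>\<in>{1..n} - {s, t}. real_of_int (v \<alpha> i * v \<alpha> i) / real_of_int (D \<alpha>)) = 0"
      by (rule sum.neutral) (use zi in auto)
    have "1 / real_of_int (D s) + 1 / real_of_int (D t) = 1"
      using k r sum_split2[OF fin sI tI st, of "\<lambda>\<alpha>. real_of_int (v \<alpha> i * v \<alpha> i) / real_of_int (D \<alpha>)"] si ti
      by simp
    moreover have "real_of_int (D s) \<ge> 1" "real_of_int (D t) \<ge> 1" using Dpos sI tI by auto
    ultimately have "real_of_int (D t) + real_of_int (D s) = real_of_int (D s) * real_of_int (D t)"
      by (simp add: field_simps)
    hence "D t + D s = D s * D t" by (metis of_int_add of_int_mult of_int_eq_iff)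
    hence "(D s - 1) * (D t - 1) = 1" by (simp add: algebra_simps)
    moreover have "D s - 1 \<ge> 0" "D t - 1 \<ge> 0" using Dpos[OF sI] Dpos[OF tI] by auto
    ultimately have "D s - 1 = 1 \<and> D t - 1 = 1" using int_prod1 by blast
    thus ?thesis by simp
  qed
  have "D s = v s i * v s i + (\<Sum>k\<in>{1..n} - {i}. v s k * v s k)"
    unfolding D_def dotp_def using iI by (simp add: sum.remove)
  hence s1: "(\<Sum>k\<in>{1..n} - {i}. v s k * v s k) = 1" using Dst si by simp
  then obtain j where jI': "j \<in> {1..n} - {i}" and sj: "v s j * v s j = 1"
    and sz: "\<forall>k\<in>{1..n} - {i}. k \<noteq> j \<longrightarrow> v s k = 0"
    using sq_sum_one[OF _ s1] by blast
  have jI: "j \<in> {1..n}" and ij: "i \<noteq> j" using jI' by auto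
  have stj: "v s i * v s j + v t i * v t j = 0"
  proof -
    have k: "(\<Sum>\<alpha>\<in>{1..n}. real_of_int (v \<alpha> i * v \<alpha> j) / real_of_int (D \<alpha>)) = 0"
      using key[OF orth iI jI] ij unfolding D_def by simp
    have r: "(\<Sum>\<alpha>\<in>{1..n} - {s, t}. real_of_int (v \<alpha> i * v \<alpha> j) / real_of_int (D \<alpha>)) = 0"
      by (rule sum.neutral) (use zi in auto)
    have "real_of_int (v s i * v s j) / 2 + real_of_int (v t i * v t j) / 2 = 0"
      using k r sum_split2[OF fin sI tI st, of "\<lambda>\<alpha>. real_of_int (v \<alpha> i * v \<alpha> j) / real_of_int (D \<alpha>)"] Dst
      by simp
    hence "real_of_int (v s i * v s j + v t i * v t j) = 0" by simp
    thus ?thesis by (metis of_int_eq_0_iff)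
  qed
  have tj_eq: "v t j = - (v t i * v s i * v s j)"
  proof -
    have "v t j = (v t i * v t i) * v t j" using ti by simp
    also have "\<dots> = v t i * (v t i * v t j)" by (simp add: mult.assoc)
    also have "v t i * v t j = - (v s i * v s j)" using stj by simp
    finally show ?thesis by (simp add: mult.assoc)
  qed
  have tj: "v t j * v t j = 1"
  proof -
    have "v t j * v t j = (v t i * v t i) * (v s i * v s i) * (v s j * v s j)"
      unfolding tj_eq by (simp add: algebra_simps)
    thus ?thesis using ti si sj by simp
  qed
  have tz: "v t k = 0" if "k \<in> {1..n}" "k \<noteq> i" "k \<noteq> j" for k
  proof -
    have "D t = v t i * v t i + v t j * v t j + (\<Sum>k\<in>{1..n} - {i, j}. v t k * v t k)"
      unfolding D_def dotp_def using sum_split2[OF fin iI jI ij] .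
    hence "(\<Sum>k\<in>{1..n} - {i, j}. v t k * v t k) = 0" using Dst ti tj by simp
    thus ?thesis using sq_sum_zero[of "{1..n} - {i, j}" "v t" k] that by auto
  qed
  have zj: "v \<alpha> j = 0" if \<alpha>I: "\<alpha> \<in> {1..n}" "\<alpha> \<noteq> s" "\<alpha> \<noteq> t" for \<alpha>
  proof -
    define f where "f \<beta> = real_of_int (v \<beta> j * v \<beta> j) / real_of_int (D \<beta>)" for \<beta>
    have k: "sum f {1..n} = 1"
      using key[OF orth jI jI] unfolding D_def f_def by simp
    have fs: "f s = 1 / 2" unfolding f_def using sj Dst by simp
    have ft: "f t = 1 / 2" unfolding f_def using tj Dst by simp
    have sp2: "sum f {1..n} = f s + f t + sum f ({1..n} - {s, t})"
      by (rule sum_split2[OF fin sI tI st])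
    have r: "sum f ({1..n} - {s, t}) = 0" using k fs ft sp2 by linarith
    have nn: "0 \<le> f \<beta>" if "\<beta> \<in> {1..n} - {s, t}" for \<beta>
    proof -
      have "D \<beta> \<ge> 1" using Dpos that by blast
      thus ?thesis unfolding f_def by (intro divide_nonneg_nonneg) auto
    qed
    have "\<forall>\<beta>\<in>{1..n} - {s, t}. f \<beta> = 0"
      using sum_nonneg_eq_0_iff[of "{1..n} - {s, t}" f] nn r by simp
    hence "f \<alpha> = 0" using \<alpha>I by simp
    moreover have "real_of_int (D \<alpha>) \<noteq> 0" using Dpos[OF \<alpha>I(1)] by simp
    ultimately have "real_of_int (v \<alpha> j * v \<alpha> j) = 0" unfolding f_def by simp
    thus ?thesis by simp
  qed
  define \<epsilon> where "\<epsilon> k = (if k = j then v s i * v s j else 1)" for k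
  have eps: "\<epsilon> k \<in> {1, -1}" for k
    unfolding \<epsilon>_def using si sj by (auto simp: zmult_eq_1_iff)
  have sp: "signed_perm n id \<epsilon>" unfolding signed_perm_def using eps by simp
  have cb: "change_basis id \<epsilon> x = (\<lambda>k. \<epsilon> k * x k)" for x
    unfolding change_basis_def by simp
  have Ej: "Eset n (\<lambda>\<alpha>. change_basis id \<epsilon> (v \<alpha>)) j = {s, t}"
  proof -
    have "\<epsilon> j \<noteq> 0" using eps[of j] by auto
    moreover have "v s j \<noteq> 0" "v t j \<noteq> 0" using sj tj by auto
    ultimately show ?thesis
      unfolding Eset_def cb dotp_unitv[OF jI] using sI tI zj by auto
  qed
  have jP: "j \<in> P2 n (\<lambda>\<alpha>. change_basis id \<epsilon> (v \<alpha>))"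
    unfolding P2_def using Ej cst jI by simp
  have A: "v s i * change_basis id \<epsilon> (v s) k = unitv i k + unitv j k" if "k \<in> {1..n}" for k
  proof -
    consider "k = i" | "k = j" | "k \<noteq> i" "k \<noteq> j" by blast
    thus ?thesis
    proof cases
      case 1 thus ?thesis using ij si unfolding cb \<epsilon>_def unitv_def by simp
    next
      case 2
      have "v s i * (v s i * v s j * v s j) = (v s i * v s i) * (v s j * v s j)" by (simp add: algebra_simps)
      thus ?thesis using 2 ij si sj unfolding cb \<epsilon>_def unitv_def by simp
    next
      case 3 thus ?thesis using sz that unfolding cb \<epsilon>_def unitv_def by simp
    qed
  qed
  have B: "v t i * change_basis id \<epsilon> (v t) k = unitv i k - unitv j k" if "k \<in> {1..n}" for k
  proof -
    consider "k = i" | "k = j" | "k \<noteq> i" "k \<noteq> j" by blast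
    thus ?thesis
    proof cases
      case 1 thus ?thesis using ij ti unfolding cb \<epsilon>_def unitv_def by simp
    next
      case 2
      have "v t i * (v s i * v s j * v t j) = - ((v t i * v t i) * (v s i * v s i) * (v s j * v s j))"
        unfolding tj_eq by (simp add: algebra_simps)
      thus ?thesis using 2 ij si sj ti unfolding cb \<epsilon>_def unitv_def by simp
    next
      case 3 thus ?thesis using tz that unfolding cb \<epsilon>_def unitv_def by simp
    qed
  qed
  have ab: "v s i \<in> {1, -1}" "v t i \<in> {1, -1}" using si ti by (auto simp: zmult_eq_1_iff)
  show ?thesis
    by (rule exI[of _ id], rule exI[of _ \<epsilon>], rule exI[of _ "v s i"], rule exI[of _ "v t i"], rule exI[of _ j])
       (use sp ab jP A B in blast)
qed

end
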